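(* Consider an inflationary tessellation of $\mathbb{R}^d$ with $N$ types of tiles, where tiles are of the same type exactly when they have the same measure, and with multiplier $\rho\,O$ ($\rho>1$ real, $O$ orthogonal). Then $\rho$ is an algebraic integer of degree at most $Nd$.
   Context: Let $m$ be Lebesgue measure on $\mathbb{R}^d$. Two measurable sets are essentially disjoint if their intersection has measure $0$. A tile is a measurable subset of $\mathbb{R}^d$ of finite positive measure. A tessellation of $\mathbb{R}^d$ consists of finitely many types of tiles together with a covering of $\mathbb{R}^d$ by pairwise essentially disjoint tiles each of one of the types. If $R_1,\dots,R_N$ are representatives of the types, the tessellation is inflationary with multiplier $\rho O$ if for each $i$ the set $\rho\,O(R_i)$ is a union of essentially disjoint tiles of the given types. *)

theory Defs
  imports "HOL-Analysis.Analysis" "HOL-Computational_Algebra.Polynomial"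
begin

definition is_tile :: "('a::euclidean_space) set \<Rightarrow> bool" where
  "is_tile S \<longleftrightarrow> S \<in> sets lebesgue \<and> 0 < emeasure lebesgue S \<and> emeasure lebesgue S < \<infinity>"

definition ess_disjoint :: "('a::euclidean_space) set \<Rightarrow> 'a set \<Rightarrow> bool" where
  "ess_disjoint S T \<longleftrightarrow> S \<inter> T \<in> null_sets lebesgue"

definition pairwise_ess_disjoint :: "('a::euclidean_space) set set \<Rightarrow> bool" where
  "pairwise_ess_disjoint \<F> \<longleftrightarrow> (\<forall>S\<in>\<F>. \<forall>T\<in>\<F>. S \<noteq> T \<longrightarrow> ess_disjoint S T)"

text \<open>Tile types are given abstractly: tp i S means "S is a tile of type i", for i < N.\<close>
definition tile_types :: "nat \<Rightarrow> (nat \<Rightarrow> ('a::euclidean_space) set \<Rightarrow> bool) \<Rightarrow> bool" where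
  "tile_types N tp \<longleftrightarrow> (\<forall>i<N. \<forall>S. tp i S \<longrightarrow> is_tile S)"

definition tessellation ::
  "nat \<Rightarrow> (nat \<Rightarrow> ('a::euclidean_space) set \<Rightarrow> bool) \<Rightarrow> 'a set set \<Rightarrow> bool" where
  "tessellation N tp \<T> \<longleftrightarrow>
     tile_types N tp \<and>
     \<Union>\<T> = UNIV \<and> pairwise_ess_disjoint \<T> \<and> (\<forall>S\<in>\<T>. \<exists>i<N. tp i S)"

definition inflationary ::
  "nat \<Rightarrow> (nat \<Rightarrow> ('a::euclidean_space) set \<Rightarrow> bool) \<Rightarrow> (nat \<Rightarrow> 'a set) \<Rightarrow> real \<Rightarrow> ('a \<Rightarrow> 'a) \<Rightarrow> bool" where
  "inflationary N tp R \<rho> Ot \<longleftrightarrow>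
     (\<forall>i<N. tp i (R i)) \<and>
     (\<forall>i<N. \<exists>\<S>. pairwise_ess_disjoint \<S> \<and> (\<forall>S\<in>\<S>. \<exists>j<N. tp j S) \<and>
                 \<Union>\<S> = (\<lambda>x. \<rho> *\<^sub>R Ot x) ` R i)"

definition alg_degree :: "real \<Rightarrow> nat" where
  "alg_degree x = (LEAST n. \<exists>p :: real poly. (\<forall>i. coeff p i \<in> \<rat>) \<and> p \<noteq> 0 \<and>
                        degree p = n \<and> poly p x = 0)"

end

theory Submission
  imports Defs "Jordan_Normal_Form.Char_Poly"
begin


lemma orth_open_le:
  fixes f :: "'a::euclidean_space \<Rightarrow> 'a"
  assumes f: "orthogonal_transformation f" and U: "open U"
  shows "emeasure lebesgue (f ` U) \<le> emeasure lebesgue U"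
proof -
  define K where "K = {(x::'a, r::real). 0 < r \<and> ball x r \<subseteq> U}"
  have cov: "\<exists>i. i \<in> K \<and> x \<in> ball (fst i) (snd i) \<and> snd i < d" if "x \<in> U" "0 < d" for x d
  proof -
    obtain e where e: "e > 0" "ball x e \<subseteq> U" using U \<open>x \<in> U\<close> open_contains_ball by blast
    show ?thesis
      by (rule exI[of _ "(x, min e (d/2))"]) (use e \<open>0<d\<close> in \<open>auto simp: K_def\<close>)
  qed
  obtain C where C: "countable C" "C \<subseteq> K"
     "pairwise (\<lambda>i j. disjnt (ball (fst i) (snd i)) (ball (fst j) (snd j))) C"
     "negligible (U - (\<Union>i \<in> C. ball (fst i) (snd i)))"
    using Vitali_covering_theorem_balls[of U K fst snd, OF cov] by blast
  define B where "B i = ball (fst i) (snd i)" for i :: "'a \<times> real"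
  define B' where "B' i = ball (f (fst i)) (snd i)" for i :: "'a \<times> real"
  have lin: "linear f" using f orthogonal_transformation_linear by blast
  have inj: "inj f" using f orthogonal_transformation_inj by blast
  have fB: "f ` B i = B' i" for i
    unfolding B_def B'_def using image_orthogonal_transformation_ball[OF f] by blast
  define N where "N = U - (\<Union>i \<in> C. B i)"
  have Nn: "negligible (f ` N)"
    apply (rule negligible_differentiable_image_negligible)
    using C(4) lin by (auto simp: N_def B_def linear_imp_differentiable_on)
  have sub: "f ` U \<subseteq> (\<Union>i\<in>C. B' i) \<union> f ` N"
    unfolding N_def fB[symmetric] by blast
  have disjB: "disjoint_family_on B C" and disjB': "disjoint_family_on B' C"
  proof -
    show "disjoint_family_on B C" using C(3) unfolding disjoint_family_on_def pairwise_def disjnt_def B_def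
      by metis
    then show "disjoint_family_on B' C" unfolding disjoint_family_on_def fB[symmetric]
      by (metis image_Int image_empty inj)
  qed
  have eqm: "emeasure lebesgue (B' i) = emeasure lebesgue (B i)" for i
  proof (cases "snd i \<ge> 0")
    case True
    have e1: "emeasure lebesgue (ball (f (fst i)) (snd i)) = ennreal (snd i ^ DIM('a)) * emeasure lebesgue (ball (0::'a) 1)"
      by (rule emeasure_lebesgue_ball_conv_unit_ball[OF True])
    have e2: "emeasure lebesgue (ball (fst i) (snd i)) = ennreal (snd i ^ DIM('a)) * emeasure lebesgue (ball (0::'a) 1)"
      by (rule emeasure_lebesgue_ball_conv_unit_ball[OF True])
    show ?thesis unfolding B_def B'_def e1 e2 ..
  next
    case False then have "snd i \<le> 0" by simp
    thus ?thesis by (simp add: B_def B'_def ball_empty)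
  qed
  have ballm: "ball x r \<in> sets lebesgue" for x :: 'a and r
    using lmeasurable_ball fmeasurableD by blast
  have Nm: "f ` N \<in> sets lebesgue" using Nn by (simp add: negligible_iff_null_sets null_setsD2)
  have UBm: "(\<Union>i\<in>C. B' i) \<in> sets lebesgue"
    by (rule sets.countable_UN''[OF C(1)]) (simp add: B'_def ballm)
  have "emeasure lebesgue (f ` U) \<le> emeasure lebesgue ((\<Union>i\<in>C. B' i) \<union> f ` N)"
    by (rule emeasure_mono[OF sub]) (use UBm Nm in blast)
  also have "\<dots> \<le> emeasure lebesgue (\<Union>i\<in>C. B' i) + emeasure lebesgue (f ` N)"
    by (rule emeasure_subadditive[OF UBm Nm])
  also have "emeasure lebesgue (f ` N) = 0" using Nn by (simp add: negligible_iff_null_sets null_setsD1)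
  also have "emeasure lebesgue (\<Union>i\<in>C. B' i) = (\<integral>\<^sup>+i. emeasure lebesgue (B' i) \<partial>count_space C)"
    by (rule emeasure_UN_countable[OF _ C(1) disjB']) (simp add: B'_def ballm)
  also have "\<dots> = (\<integral>\<^sup>+i. emeasure lebesgue (B i) \<partial>count_space C)" by (simp only: eqm)
  also have "\<dots> = emeasure lebesgue (\<Union>i\<in>C. B i)"
    by (rule emeasure_UN_countable[OF _ C(1) disjB, symmetric]) (simp add: B_def ballm)
  also have "\<dots> \<le> emeasure lebesgue U"
    apply (rule emeasure_mono)
    subgoal
    proof (rule UN_least)
      fix i assume "i \<in> C"
      then have "i \<in> K" using C(2) by blast
      then show "B i \<subseteq> U" unfolding K_def B_def by (cases i) simp
    qed
    subgoal using U by (simp add: borel_open sets_completionI_sets)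
    done
  finally show ?thesis by simp
qed

lemma orth_meas_le:
  fixes f :: "'a::euclidean_space \<Rightarrow> 'a"
  assumes f: "orthogonal_transformation f" and S: "S \<in> lmeasurable"
  shows "f ` S \<in> lmeasurable \<and> measure lebesgue (f ` S) \<le> measure lebesgue S"
proof -
  have lin: "linear f" using f orthogonal_transformation_linear by blast
  have im: "f ` A \<in> sets lebesgue" if "A \<in> sets lebesgue" for A
    by (rule differentiable_image_in_sets_lebesgue) (use that lin in \<open>auto simp: linear_imp_differentiable_on\<close>)
  have Sm: "S \<in> sets lebesgue" using S by (simp add: fmeasurableD)
  have le: "emeasure lebesgue (f ` S) \<le> ennreal (measure lebesgue S + e)" if "e > 0" for e
  proof -
    obtain T where T: "open T" "S \<subseteq> T" "(T - S) \<in> lmeasurable" "emeasure lebesgue (T - S) < ennreal e"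
      using sets_lebesgue_outer_open[OF Sm \<open>e > 0\<close>] by blast
    have Tm: "T \<in> sets lebesgue" using T(1) by (simp add: borel_open sets_completionI_sets)
    have "emeasure lebesgue (f ` S) \<le> emeasure lebesgue (f ` T)"
      by (rule emeasure_mono) (use T(2) im Tm in auto)
    also have "\<dots> \<le> emeasure lebesgue T" by (rule orth_open_le[OF f T(1)])
    also have "T = S \<union> (T - S)" using T(2) by blast
    also have "emeasure lebesgue (S \<union> (T - S)) \<le> emeasure lebesgue S + emeasure lebesgue (T - S)"
      by (rule emeasure_subadditive) (use Sm T(3) in \<open>auto simp: fmeasurableD\<close>)
    also have "\<dots> \<le> ennreal (measure lebesgue S) + ennreal e"
      unfolding emeasure_eq_measure2[OF S] using T(4) by (intro add_mono) auto
    also have "\<dots> = ennreal (measure lebesgue S + e)"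
      using \<open>e > 0\<close> by (simp add: ennreal_plus)
    finally show ?thesis .
  qed
  have fin: "f ` S \<in> lmeasurable"
  proof -
    have "emeasure lebesgue (f ` S) < \<infinity>" using le[of 1] by (simp add: le_less_trans)
    then show ?thesis using im[OF Sm] by (simp add: fmeasurable_def)
  qed
  have "measure lebesgue (f ` S) \<le> measure lebesgue S + e" if "e > 0" for e
  proof -
    have "ennreal (measure lebesgue (f ` S)) \<le> ennreal (measure lebesgue S + e)"
      using le[OF that] unfolding emeasure_eq_measure2[OF fin] .
    moreover have nn: "0 \<le> measure lebesgue S + e" using that by simp
    ultimately show ?thesis using ennreal_le_iff[OF nn] by blast
  qed
  then have "measure lebesgue (f ` S) \<le> measure lebesgue S" by (rule field_le_epsilon)
  with fin show ?thesis by blast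
qed

lemma orth_meas:
  fixes f :: "'a::euclidean_space \<Rightarrow> 'a"
  assumes f: "orthogonal_transformation f" and S: "S \<in> lmeasurable"
  shows "f ` S \<in> lmeasurable \<and> measure lebesgue (f ` S) = measure lebesgue S"
proof -
  have 1: "f ` S \<in> lmeasurable" "measure lebesgue (f ` S) \<le> measure lebesgue S"
    using orth_meas_le[OF f S] by auto
  have g: "orthogonal_transformation (inv_into UNIV f)" by (rule orthogonal_transformation_inv[OF f])
  have "inv_into UNIV f ` (f ` S) = S"
    using orthogonal_transformation_inj[OF f] by (simp add: image_inv_f_f)
  then have "measure lebesgue S \<le> measure lebesgue (f ` S)"
    using orth_meas_le[OF g 1(1)] by simp
  with 1 show ?thesis by auto
qed

lemma scaled_orth_meas:
  fixes f :: "'a::euclidean_space \<Rightarrow> 'a"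
  assumes f: "orthogonal_transformation f" and S: "S \<in> lmeasurable"
  shows "(\<lambda>x. c *\<^sub>R f x) ` S \<in> lmeasurable \<and>
         measure lebesgue ((\<lambda>x. c *\<^sub>R f x) ` S) = \<bar>c\<bar> ^ DIM('a) * measure lebesgue S"
proof -
  have 1: "f ` S \<in> lmeasurable" "measure lebesgue (f ` S) = measure lebesgue S"
    using orth_meas[OF f S] by auto
  have eq: "(\<lambda>x. c *\<^sub>R f x) ` S = (\<lambda>x. c *\<^sub>R x + 0) ` (f ` S)" by (simp add: image_image)
  have e1: "emeasure lebesgue ((\<lambda>x. c *\<^sub>R x + 0) ` (f ` S)) = \<bar>c\<bar> ^ DIM('a) * emeasure lebesgue (f ` S)"
    by (rule emeasure_lebesgue_affine)
  have "emeasure lebesgue ((\<lambda>x. c *\<^sub>R x + 0) ` (f ` S)) < \<infinity>"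
    unfolding e1 emeasure_eq_measure2[OF 1(1)] by (simp add: ennreal_mult_less_top)
  moreover have "(\<lambda>x. c *\<^sub>R x + 0) ` (f ` S) \<in> sets lebesgue"
    by (rule differentiable_image_in_sets_lebesgue) (use 1 in \<open>auto simp: fmeasurableD\<close>)
  ultimately have "(\<lambda>x. c *\<^sub>R x + 0) ` (f ` S) \<in> lmeasurable"
    by (intro fmeasurableI) auto
  moreover have "measure lebesgue ((\<lambda>x. c *\<^sub>R x + 0) ` (f ` S)) = \<bar>c\<bar> ^ DIM('a) * measure lebesgue (f ` S)"
    by (rule measure_lebesgue_affine)
  ultimately show ?thesis using 1 eq by simp
qed



lemma family_count:
  fixes SS :: "'a::euclidean_space set set" and tp :: "nat \<Rightarrow> 'a set \<Rightarrow> bool" and mu :: "nat \<Rightarrow> real"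
  assumes pw: "\<And>S T. S \<in> SS \<Longrightarrow> T \<in> SS \<Longrightarrow> S \<noteq> T \<Longrightarrow> S \<inter> T \<in> null_sets lebesgue"
    and tys: "\<And>S. S \<in> SS \<Longrightarrow> \<exists>j<N. tp j S"
    and tm: "\<And>j S. j < N \<Longrightarrow> tp j S \<Longrightarrow> S \<in> lmeasurable \<and> measure lebesgue S = mu j"
    and mpos: "\<And>j. j < N \<Longrightarrow> mu j > 0"
    and uniq: "\<And>j k S. j < N \<Longrightarrow> k < N \<Longrightarrow> tp j S \<Longrightarrow> tp k S \<Longrightarrow> j = k"
    and U: "\<Union>SS \<in> lmeasurable"
  shows "measure lebesgue (\<Union>SS) = (\<Sum>j<N. real (card {S\<in>SS. tp j S}) * mu j)"
proof -
  have SSm: "S \<in> lmeasurable" if "S \<in> SS" for S using tys[OF that] tm by blast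
  have pwAE: "pairwise (\<lambda>S T. AE x in lebesgue. x \<notin> S \<or> x \<notin> T) F" if "F \<subseteq> SS" for F
    unfolding pairwise_def
  proof (intro ballI impI)
    fix S T assume "S \<in> F" "T \<in> F" "S \<noteq> T"
    then have "S \<inter> T \<in> null_sets lebesgue" using pw that by blast
    from AE_not_in[OF this] show "AE x in lebesgue. x \<notin> S \<or> x \<notin> T"
      by (rule eventually_mono) blast
  qed
  obtain dd where dd: "dd > 0" "\<And>j. j < N \<Longrightarrow> dd \<le> mu j"
  proof (cases "N = 0")
    case True then show ?thesis using that[of 1] by simp
  next
    case False
    show ?thesis
    proof (rule that[of "Min (mu ` {..<N})"])
      show "0 < Min (mu ` {..<N})" using False mpos by (subst Min_gr_iff) auto
      show "Min (mu ` {..<N}) \<le> mu j" if "j < N" for j using that by (intro Min_le) auto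
    qed
  qed
  have mS: "measure lebesgue S \<ge> dd" if "S \<in> SS" for S
    using tys[OF that] tm dd(2) by force
  have fin: "finite SS"
  proof -
    have "card G \<le> nat \<lceil>measure lebesgue (\<Union>SS) / dd\<rceil>" if G: "G \<subseteq> SS" "finite G" for G
    proof -
      have "real (card G) * dd = (\<Sum>S\<in>G. dd)" by simp
      also have "\<dots> \<le> (\<Sum>S\<in>G. measure lebesgue S)" using G mS by (intro sum_mono) auto
      also have "\<dots> = measure lebesgue (\<Union>G)"
        by (rule measure_Union_AE[symmetric]) (use G SSm pwAE in auto)
      also have "\<dots> \<le> measure lebesgue (\<Union>SS)"
        by (rule measure_mono_fmeasurable) (use G SSm U in \<open>auto intro: fmeasurableD\<close>)
      finally have "real (card G) \<le> measure lebesgue (\<Union>SS) / dd"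
        using dd(1) by (simp add: field_simps)
      then show ?thesis by linarith
    qed
    then show ?thesis using finite_if_finite_subsets_card_bdd by blast
  qed
  have "measure lebesgue (\<Union>SS) = (\<Sum>S\<in>SS. measure lebesgue S)"
    by (rule measure_Union_AE) (use fin SSm pwAE in auto)
  also have "\<dots> = (\<Sum>S\<in>SS. \<Sum>j<N. if tp j S then mu j else 0)"
  proof (rule sum.cong[OF refl])
    fix S assume "S \<in> SS"
    then obtain j0 where j0: "j0 < N" "tp j0 S" using tys by blast
    have "(\<Sum>j<N. if tp j S then mu j else 0) = (\<Sum>j<N. if j = j0 then mu j else 0)"
      by (rule sum.cong[OF refl]) (use j0 uniq in auto)
    also have "\<dots> = mu j0" using j0(1) by simp
    finally show "measure lebesgue S = (\<Sum>j<N. if tp j S then mu j else 0)"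
      using tm[OF j0] by simp
  qed
  also have "\<dots> = (\<Sum>j<N. \<Sum>S\<in>SS. if tp j S then mu j else 0)" by (rule sum.swap)
  also have "\<dots> = (\<Sum>j<N. real (card {S\<in>SS. tp j S}) * mu j)"
    by (rule sum.cong[OF refl]) (simp add: sum.If_cases fin Int_def)
  finally show ?thesis .
qed



lemma eig_alg:
  fixes a :: "nat \<Rightarrow> nat \<Rightarrow> nat" and m :: "nat \<Rightarrow> real" and lam :: real
  assumes N: "N > 0" and mpos: "\<And>j. j < N \<Longrightarrow> m j > 0"
    and eq: "\<And>i. i < N \<Longrightarrow> lam * m i = (\<Sum>j<N. real (a i j) * m j)"
  shows "\<exists>p :: int poly. degree p = N \<and> lead_coeff p = 1 \<and> poly (map_poly of_int p) lam = 0"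
proof -
  define Ai where "Ai = Matrix.mat N N (\<lambda>(i,j). int (a i j))"
  have Ai: "Ai \<in> carrier_mat N N" by (simp add: Ai_def)
  define Ar where "Ar = map_mat (of_int :: int \<Rightarrow> real) Ai"
  have Ar: "Ar \<in> carrier_mat N N" using Ai by (simp add: Ar_def)
  define v where "v = Matrix.vec N m"
  have ev: "eigenvector Ar v lam"
    unfolding eigenvector_def
  proof (intro conjI)
    show "v \<in> carrier_vec (dim_row Ar)" using Ar by (simp add: v_def)
    show "v \<noteq> 0\<^sub>v (dim_row Ar)"
    proof
      assume "v = 0\<^sub>v (dim_row Ar)"
      then have "vec_index v 0 = 0" using N Ar by simp
      then show False using mpos[OF N] N by (simp add: v_def)
    qed
    show "Ar *\<^sub>v v = lam \<cdot>\<^sub>v v"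
    proof (rule eq_vecI)
      show "dim_vec (Ar *\<^sub>v v) = dim_vec (lam \<cdot>\<^sub>v v)" using Ar by (simp add: v_def)
      fix i assume "i < dim_vec (lam \<cdot>\<^sub>v v)"
      then have i: "i < N" by (simp add: v_def)
      have "vec_index (Ar *\<^sub>v v) i = (\<Sum>j<N. real (a i j) * m j)"
        using i Ar unfolding Ar_def Ai_def v_def
        by (simp add: scalar_prod_def lessThan_atLeast0 mult.commute)
      also have "\<dots> = lam * m i" using eq[OF i] by simp
      finally show "vec_index (Ar *\<^sub>v v) i = vec_index (lam \<cdot>\<^sub>v v) i" using i by (simp add: v_def)
    qed
  qed
  then have "eigenvalue Ar lam" unfolding eigenvalue_def by blast
  then have "poly (char_poly Ar) lam = 0" using eigenvalue_root_char_poly[OF Ar] by simp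
  moreover have "char_poly Ar = map_poly of_int (char_poly Ai)"
    unfolding Ar_def by (rule of_int_hom.char_poly_hom[OF Ai])
  ultimately show ?thesis using degree_monic_char_poly[OF Ai] by auto
qed


theorem mainTheorem2:
  fixes N :: nat
    and tp :: "nat \<Rightarrow> (real ^ 'd) set \<Rightarrow> bool"
    and \<T> :: "(real ^ 'd) set set"
    and R :: "nat \<Rightarrow> (real ^ 'd) set"
    and \<rho> :: real
    and Ot :: "real ^ 'd \<Rightarrow> real ^ 'd"
  assumes tess: "tessellation N tp \<T>"
    and same_type_iff_same_measure:
      "\<And>i j S S'. i < N \<Longrightarrow> j < N \<Longrightarrow> tp i S \<Longrightarrow> tp j S' \<Longrightarrow>
         (i = j \<longleftrightarrow> emeasure lebesgue S = emeasure lebesgue S')"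
    and infl: "inflationary N tp R \<rho> Ot"
    and rho: "\<rho> > 1"
    and orth: "orthogonal_transformation Ot"
  shows "algebraic_int \<rho> \<and> alg_degree \<rho> \<le> N * CARD('d)"
proof -
  define d where "d = CARD('d)"
  have d0: "d > 0" unfolding d_def by simp
  have tt: "tile_types N tp" and UT: "\<Union>\<T> = UNIV" and Tty: "\<forall>S\<in>\<T>. \<exists>i<N. tp i S"
    using tess unfolding tessellation_def by auto
  have N0: "N > 0"
  proof (rule ccontr)
    assume "\<not> N > 0"
    then have "\<T> = {}" using Tty by auto
    then show False using UT by auto
  qed
  have tpR: "\<And>i. i < N \<Longrightarrow> tp i (R i)" using infl unfolding inflationary_def by auto
  have "\<forall>i. \<exists>SS. i < N \<longrightarrow> (pairwise_ess_disjoint SS \<and> (\<forall>S\<in>SS. \<exists>j<N. tp j S) \<and>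
                 \<Union>SS = (\<lambda>x. \<rho> *\<^sub>R Ot x) ` R i)"
    using infl unfolding inflationary_def by blast
  then obtain SS where SS: "\<And>i. i < N \<Longrightarrow> pairwise_ess_disjoint (SS i) \<and> (\<forall>S\<in>SS i. \<exists>j<N. tp j S) \<and>
                 \<Union>(SS i) = (\<lambda>x. \<rho> *\<^sub>R Ot x) ` R i"
    by metis
  define mu where "mu j = measure lebesgue (R j)" for j
  have tileL: "S \<in> lmeasurable" if "is_tile S" for S :: "(real ^ 'd) set"
    using that unfolding is_tile_def by (intro fmeasurableI) auto
  have Rm: "R j \<in> lmeasurable" if "j < N" for j
    using tt tpR[OF that] that tileL unfolding tile_types_def by blast
  have mpos: "mu j > 0" if "j < N" for j
  proof -
    have "is_tile (R j)" using tt tpR[OF that] that unfolding tile_types_def by blast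
    then have "0 < emeasure lebesgue (R j)" unfolding is_tile_def by blast
    then show ?thesis unfolding mu_def emeasure_eq_measure2[OF Rm[OF that]] by simp
  qed
  have tm: "S \<in> lmeasurable \<and> measure lebesgue S = mu j" if "j < N" "tp j S" for j S
  proof -
    have "is_tile S" using tt that unfolding tile_types_def by blast
    then have Sm: "S \<in> lmeasurable" by (rule tileL)
    have "emeasure lebesgue S = emeasure lebesgue (R j)"
      using same_type_iff_same_measure[OF that(1) that(1) that(2) tpR[OF that(1)]] by simp
    then have "ennreal (measure lebesgue S) = ennreal (mu j)"
      unfolding mu_def emeasure_eq_measure2[OF Sm] emeasure_eq_measure2[OF Rm[OF that(1)]] .
    then have "measure lebesgue S = mu j" by (simp add: mu_def)
    with Sm show ?thesis by blast
  qed
  have uniq: "j = k" if "j < N" "k < N" "tp j S" "tp k S" for j k S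
    using same_type_iff_same_measure[OF that] by simp
  define a where "a i j = card {S\<in>SS i. tp j S}" for i j
  have eqn: "\<rho> ^ d * mu i = (\<Sum>j<N. real (a i j) * mu j)" if i: "i < N" for i
  proof -
    have sc: "(\<lambda>x. \<rho> *\<^sub>R Ot x) ` R i \<in> lmeasurable \<and>
         measure lebesgue ((\<lambda>x. \<rho> *\<^sub>R Ot x) ` R i) = \<bar>\<rho>\<bar> ^ DIM(real ^ 'd) * measure lebesgue (R i)"
      by (rule scaled_orth_meas[OF orth Rm[OF i]])
    have "measure lebesgue (\<Union>(SS i)) = (\<Sum>j<N. real (card {S\<in>SS i. tp j S}) * mu j)"
    proof (rule family_count)
      show "S \<inter> T \<in> null_sets lebesgue" if "S \<in> SS i" "T \<in> SS i" "S \<noteq> T" for S T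
        using SS[OF i] that unfolding pairwise_ess_disjoint_def ess_disjoint_def by blast
      show "\<exists>j<N. tp j S" if "S \<in> SS i" for S using SS[OF i] that by blast
      show "\<Union>(SS i) \<in> lmeasurable" using SS[OF i] sc by simp
    qed (use tm mpos uniq in auto)
    then show ?thesis using SS[OF i] sc rho by (simp add: a_def mu_def d_def)
  qed
  obtain p :: "int poly" where p: "degree p = N" "lead_coeff p = 1" "poly (map_poly of_int p) (\<rho> ^ d) = 0"
    using eig_alg[OF N0 mpos eqn] by blast
  define P :: "real poly" where "P = pcompose (map_poly of_int p) (monom 1 d)"
  have degm: "degree (map_poly (of_int :: int \<Rightarrow> real) p) = N"
    using p(1) by (subst degree_map_poly) auto
  have lcm: "lead_coeff (map_poly (of_int :: int \<Rightarrow> real) p) = 1"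
    using p(2) degm by (simp add: coeff_map_poly)
  have Pdeg: "degree P = N * d" unfolding P_def degree_pcompose degm by (simp add: degree_monom_eq)
  have Plc: "lead_coeff P = 1" unfolding P_def
    by (subst lead_coeff_comp) (use d0 lcm in \<open>auto simp: degree_monom_eq\<close>)
  have Pint: "coeff P i \<in> \<int>" for i unfolding P_def
    by (rule coeff_pcompose_semiring_closed[of \<int>]) (auto simp: coeff_map_poly coeff_monom)
  have Proot: "poly P \<rho> = 0" unfolding P_def poly_pcompose using p(3) by (simp add: poly_monom)
  have "algebraic_int \<rho>" by (rule algebraic_int.intros[OF Plc]) (use Pint Proot in auto)
  moreover have "alg_degree \<rho> \<le> N * d"
    unfolding alg_degree_def
  proof (rule Least_le, intro exI conjI)
    show "\<forall>i. coeff P i \<in> \<rat>" using Pint Ints_subset_Rats by blast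
    show "P \<noteq> 0" using Plc by auto
  qed (use Pdeg Proot in auto)
  ultimately show ?thesis unfolding d_def by blast
qed

end
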